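(* Let $d\in\mathbb{N}$, $c>0$, $\gamma>0$, and for $t>0$ and $\mathbf{x}\in\mathbb{R}^d$ with $\|\mathbf{x}\|<ct$ define $$p(\mathbf{x},t)=\frac{\Gamma(\gamma+\frac d2)}{\pi^{d/2}\Gamma(\gamma)}\,\frac{1}{(ct)^{d-2+2\gamma}}\left(c^2t^2-\|\mathbf{x}\|^2\right)^{\gamma-1}.$$ Then for each $t>0$, $p(\cdot,t)$ is a probability density on the open ball $\{\|\mathbf{x}\|<ct\}$, and $p$ satisfies the Euler–Poisson–Darboux equation $$\left(\frac{\partial^2}{\partial t^2}+\frac{d+2\gamma-1}{t}\frac{\partial}{\partial t}\right)p(\mathbf{x},t)=c^2\sum_{j=1}^d\frac{\partial^2}{\partial x_j^2}p(\mathbf{x},t),\qquad t>0,\ \|\mathbf{x}\|<ct.$$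
   Context: $\|\cdot\|$ is the Euclidean norm on $\mathbb{R}^d$. *)

theory Defs
  imports "HOL-Analysis.Analysis"
begin

text \<open>The density p(x,t) on R^d, d = CARD('n), extended by 0 outside the open ball
  of radius c t (only its values on the ball matter).\<close>
definition epd_density :: "real \<Rightarrow> real \<Rightarrow> real ^ 'n \<Rightarrow> real \<Rightarrow> real" where
  "epd_density c \<gamma> x t =
     (if t > 0 \<and> norm x < c * t then
        Gamma (\<gamma> + real CARD('n) / 2) / (pi powr (real CARD('n) / 2) * Gamma \<gamma>)
        * (1 / (c * t) powr (real CARD('n) - 2 + 2 * \<gamma>))
        * (c\<^sup>2 * t\<^sup>2 - (norm x)\<^sup>2) powr (\<gamma> - 1)
      else 0)"

end

theory Submission
  imports Defs
begin


lemma powr_ftc: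
  fixes e a b :: real assumes "e > 0" "0 \<le> a" "a \<le> b"
  shows "((\<lambda>v. e * v powr (e-1)) has_integral (b powr e - a powr e)) {a..b}"
proof (rule fundamental_theorem_of_calculus_interior[OF assms(3)])
  show "continuous_on {a..b} (\<lambda>v. v powr e)"
    using assms by (intro continuous_on_powr') (auto intro: continuous_intros)
  fix x assume "x \<in> {a<..<b}"
  hence "x > 0" using assms by auto
  thus "((\<lambda>v. v powr e) has_vector_derivative e * x powr (e - 1)) (at x)"
    using has_real_derivative_powr[of x e] by (simp add: has_real_derivative_iff_has_vector_derivative)
qed

lemma sqrt_pow_powr: "0 \<le> (u::real) \<Longrightarrow> n > 0 \<Longrightarrow> sqrt u ^ n = u powr (real n / 2)"
proof (cases "u = 0")
  case False
  assume "0 \<le> u"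
  hence "sqrt u = u powr (1/2)" by (simp add: powr_half_sqrt)
  thus ?thesis using False by (simp add: powr_power)
qed simp

lemma set_eq1: "u < 0 \<Longrightarrow> ball 0 R \<inter> (\<lambda>x::'a::real_normed_vector. (norm x / R)\<^sup>2) -` {u<..} = ball 0 R"
  by (auto, smt (verit) zero_le_power2)

lemma set_eq2: "R > 0 \<Longrightarrow> 0 \<le> u \<Longrightarrow> ball 0 R \<inter> (\<lambda>x::'a::real_normed_vector. (norm x / R)\<^sup>2) -` {u<..} = ball 0 R - cball 0 (R * sqrt u)"
proof -
  assume R: "R > 0" and u: "0 \<le> u"
  have "u < (norm x / R)\<^sup>2 \<longleftrightarrow> R * sqrt u < norm x" for x :: 'a
  proof -
    have "u < (norm x / R)\<^sup>2 \<longleftrightarrow> sqrt u < norm x / R"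
      using u by (metis norm_ge_zero real_less_lsqrt real_less_rsqrt real_sqrt_abs real_sqrt_less_iff zero_le_divide_iff R less_imp_le abs_of_nonneg)
    also have "\<dots> \<longleftrightarrow> R * sqrt u < norm x" using R by (simp add: field_simps)
    finally show ?thesis .
  qed
  thus ?thesis by (auto simp: dist_norm)
qed

lemma emeasure_ball_n: "r \<ge> 0 \<Longrightarrow> emeasure lborel (ball (0::real^'n) r) = ennreal (unit_ball_vol (real CARD('n)) * r ^ CARD('n))"
  using emeasure_ball[of r "0::real^'n"] by simp
lemma emeasure_cball_n: "r \<ge> 0 \<Longrightarrow> emeasure lborel (cball (0::real^'n) r) = ennreal (unit_ball_vol (real CARD('n)) * r ^ CARD('n))"
  using emeasure_cball[of r "0::real^'n"] by simp


lemma density_part: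
  fixes K0 e a :: real assumes "e > 0" "0 \<le> a" "a \<le> 1" "K0 \<ge> 0"
  shows "(\<integral>\<^sup>+x. ennreal (K0 * (e * x powr (e-1))) * indicator {a..1} x \<partial>lborel) = ennreal (K0 * (1 - a powr e))"
proof -
  have "((\<lambda>x. K0 * (e * x powr (e-1))) has_integral K0 * (1 powr e - a powr e)) {a..1}"
    using powr_ftc[OF assms(1-3)] by (rule has_integral_mult_right)
  hence "(\<integral>\<^sup>+x. ennreal (K0 * (e * x powr (e-1))) * indicator {a..1} x \<partial>lborel) = ennreal (K0 * (1 powr e - a powr e))"
    by (intro nn_integral_has_integral_lebesgue') (use assms in auto)
  thus ?thesis by simp
qed

lemma radial_measure:
  fixes R :: real assumes R: "R > 0"
  defines "d \<equiv> real CARD('n)"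
  defines "K0 \<equiv> unit_ball_vol d * R ^ CARD('n)"
  shows "distr (density lborel (indicator (ball (0::real^'n) R))) borel (\<lambda>x. (norm x / R)\<^sup>2)
       = density lborel (\<lambda>u. ennreal (indicator {0..1} u * (K0 * ((d/2) * u powr (d/2 - 1)))))"
    (is "?M = ?N")
proof (rule measure_eqI_lessThan)
  show "sets ?M = sets borel" "sets ?N = sets borel" by auto
  have K0: "K0 \<ge> 0" using R by (simp add: K0_def d_def)
  have d: "d/2 > 0" by (simp add: d_def)
  have M: "emeasure ?M {u<..} = emeasure lborel (ball 0 R \<inter> (\<lambda>x::real^'n. (norm x / R)\<^sup>2) -` {u<..})" for u
  proof -
    have S: "(\<lambda>x::real^'n. (norm x / R)\<^sup>2) -` {u<..} \<in> sets lborel"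
      using measurable_sets_borel[of "\<lambda>x::real^'n. (norm x / R)\<^sup>2" borel "{u<..}"] by auto
    show ?thesis
      by (subst emeasure_distr) (auto intro!: emeasure_restricted S)
  qed
  show "emeasure ?M {x<..} < \<infinity>" for x
  proof -
    have "emeasure ?M {x<..} \<le> emeasure lborel (ball (0::real^'n) R)"
      unfolding M by (intro emeasure_mono) auto
    also have "\<dots> < \<infinity>" using R by (simp add: emeasure_ball_n)
    finally show ?thesis .
  qed
  fix u :: real
  have N: "emeasure ?N {u<..} = (\<integral>\<^sup>+x. ennreal (K0 * ((d/2) * x powr (d/2 - 1))) * indicator ({0..1} \<inter> {u<..}) x \<partial>lborel)"
    by (subst emeasure_density) (auto intro!: nn_integral_cong simp: indicator_def)
  consider "u < 0" | "0 \<le> u" "u < 1" | "1 \<le> u" by linarith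
  then show "emeasure ?M {u<..} = emeasure ?N {u<..}"
  proof cases
    case 1
    have "emeasure ?M {u<..} = ennreal K0"
      unfolding M set_eq1[OF 1] using R by (simp add: emeasure_ball_n K0_def d_def)
    moreover have "{0..1} \<inter> {u<..} = {0..(1::real)}" using 1 by auto
    ultimately show ?thesis unfolding N using density_part[OF d _ _ K0, of 0] d by simp
  next
    case 2
    have "emeasure ?M {u<..} = emeasure lborel (ball (0::real^'n) R) - emeasure lborel (cball (0::real^'n) (R * sqrt u))"
      unfolding M set_eq2[OF R 2(1)] 
    proof (rule emeasure_Diff)
      show "emeasure lborel (cball (0::real^'n) (R * sqrt u)) \<noteq> \<infinity>" using R 2 by (simp add: emeasure_cball_n)
      have "R * sqrt u < R * 1" using R 2 by (intro mult_strict_left_mono) auto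
      thus "cball (0::real^'n) (R * sqrt u) \<subseteq> ball 0 R" by auto
    qed auto
    also have "\<dots> = ennreal (K0 * (1 - u powr (d/2)))"
      using R 2 by (simp add: emeasure_ball_n emeasure_cball_n ennreal_minus K0_def d_def power_mult_distrib sqrt_pow_powr algebra_simps)
    finally have A: "emeasure ?M {u<..} = ennreal (K0 * (1 - u powr (d/2)))" .
    have "(\<integral>\<^sup>+x. ennreal (K0 * ((d/2) * x powr (d/2 - 1))) * indicator ({0..1} \<inter> {u<..}) x \<partial>lborel)
       = (\<integral>\<^sup>+x. ennreal (K0 * ((d/2) * x powr (d/2 - 1))) * indicator {u..1} x \<partial>lborel)"
    proof (rule nn_integral_cong_AE)
      have "AE x in lborel. x \<noteq> u" by (rule AE_lborel_singleton)
      thus "AE x in lborel. ennreal (K0 * ((d/2) * x powr (d/2 - 1))) * indicator ({0..1} \<inter> {u<..}) x =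
               ennreal (K0 * ((d/2) * x powr (d/2 - 1))) * indicator {u..1} x"
        by eventually_elim (use 2 in \<open>auto simp: indicator_def\<close>)
    qed
    also have "\<dots> = ennreal (K0 * (1 - u powr (d/2)))"
      using density_part[OF d _ _ K0, of u] 2 by simp
    finally show ?thesis unfolding N A by simp
  next
    case 3
    have "ball 0 R \<inter> (\<lambda>x::real^'n. (norm x / R)\<^sup>2) -` {u<..} = {}"
    proof -
      { fix x :: "real^'n" assume "norm x < R"
        hence a: "norm x / R < 1" "0 \<le> norm x / R" using R by auto
        hence "(norm x / R)^2 < 1"
          by (metis abs_of_nonneg abs_square_less_1)
        hence "\<not> u < (norm x / R)^2" using 3 by simp }
      thus ?thesis by auto
    qed
    moreover have "{0..1} \<inter> {u<..} = ({}::real set)" using 3 by auto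
    ultimately show ?thesis unfolding N M by simp
  qed
qed


lemma ball_integral:
  fixes R \<gamma> :: real assumes R: "R > 0" and g: "\<gamma> > 0"
  defines "d \<equiv> real CARD('n)"
  shows "((\<lambda>x::real^'n. (R\<^sup>2 - (norm x)\<^sup>2) powr (\<gamma>-1)) has_integral
           (unit_ball_vol d * R ^ CARD('n) * (d/2) * R powr (2*\<gamma>-2) * Beta (d/2) \<gamma>)) (ball 0 R)"
proof -
  define K0 where "K0 = unit_ball_vol d * R ^ CARD('n)"
  define h where "h u = R powr (2*\<gamma>-2) * (1-u) powr (\<gamma>-1)" for u :: real
  define V where "V = K0 * (d/2) * R powr (2*\<gamma>-2) * Beta (d/2) \<gamma>"
  have d: "d/2 > 0" by (simp add: d_def)
  have K0: "K0 \<ge> 0" using R by (simp add: K0_def d_def)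
  have V: "V \<ge> 0" unfolding V_def Beta_def using K0 d g by (intro mult_nonneg_nonneg divide_nonneg_pos Gamma_real_pos) (auto intro!: Gamma_real_pos less_imp_le)
  have 1: "(\<integral>\<^sup>+x. ennreal (indicator (ball (0::real^'n) R) x * (R\<^sup>2 - (norm x)\<^sup>2) powr (\<gamma>-1)) \<partial>lborel)
        = (\<integral>\<^sup>+x. ennreal (h ((norm x / R)\<^sup>2)) \<partial>density lborel (indicator (ball (0::real^'n) R)))"
  proof -
    have "(\<integral>\<^sup>+x. ennreal (h ((norm x / R)\<^sup>2)) \<partial>density lborel (indicator (ball (0::real^'n) R)))
        = (\<integral>\<^sup>+x. indicator (ball (0::real^'n) R) x * ennreal (h ((norm x / R)\<^sup>2)) \<partial>lborel)"
      by (subst nn_integral_density) (auto simp: h_def intro: borel_measurable_indicator)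
    also have "\<dots> = (\<integral>\<^sup>+x. ennreal (indicator (ball (0::real^'n) R) x * (R\<^sup>2 - (norm x)\<^sup>2) powr (\<gamma>-1)) \<partial>lborel)"
    proof (rule nn_integral_cong)
      fix x :: "real^'n"
      have "R\<^sup>2 - (norm x)\<^sup>2 = R\<^sup>2 * (1 - (norm x / R)\<^sup>2)" using R by (simp add: field_simps)
      hence "(R\<^sup>2 - (norm x)\<^sup>2) powr (\<gamma>-1) = (R powr 2) powr (\<gamma>-1) * (1 - (norm x / R)\<^sup>2) powr (\<gamma>-1)"
        using R by (simp add: powr_mult powr_realpow)
      also have "\<dots> = h ((norm x / R)\<^sup>2)" by (simp add: h_def powr_powr algebra_simps)
      finally show "indicator (ball 0 R) x * ennreal (h ((norm x / R)\<^sup>2)) = ennreal (indicator (ball 0 R) x * (R\<^sup>2 - (norm x)\<^sup>2) powr (\<gamma>-1))"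
        by (simp add: indicator_def)
    qed
    finally show ?thesis by simp
  qed
  also have "\<dots> = (\<integral>\<^sup>+u. ennreal (h u) \<partial>distr (density lborel (indicator (ball (0::real^'n) R))) borel (\<lambda>x. (norm x / R)\<^sup>2))"
    by (subst nn_integral_distr) (auto simp: h_def)
  also have "\<dots> = (\<integral>\<^sup>+u. ennreal (h u) \<partial>density lborel (\<lambda>u. ennreal (indicator {0..1} u * (K0 * ((d/2) * u powr (d/2 - 1))))))"
    unfolding radial_measure[OF R] K0_def d_def ..
  also have "\<dots> = (\<integral>\<^sup>+u. ennreal (indicator {0..1} u * (K0 * ((d/2) * u powr (d/2 - 1)))) * ennreal (h u) \<partial>lborel)"
    by (subst nn_integral_density) (auto simp: h_def)
  also have "\<dots> = (\<integral>\<^sup>+u. ennreal ((K0 * (d/2) * R powr (2*\<gamma>-2)) * (u powr (d/2 - 1) * (1-u) powr (\<gamma>-1))) * indicator {0..1} u \<partial>lborel)"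
    by (intro nn_integral_cong) (auto simp: indicator_def h_def ennreal_mult'[symmetric] K0 algebra_simps)
  also have "\<dots> = ennreal V"
    unfolding V_def
    by (intro nn_integral_has_integral_lebesgue' has_integral_mult_right has_integral_Beta_real d g)
       (use K0 d in auto)
  finally have I: "(\<integral>\<^sup>+x. ennreal (indicator (ball (0::real^'n) R) x * (R\<^sup>2 - (norm x)\<^sup>2) powr (\<gamma>-1)) \<partial>lborel) = ennreal V" .
  have meas: "(\<lambda>x::real^'n. indicator (ball 0 R) x * (R\<^sup>2 - (norm x)\<^sup>2) powr (\<gamma>-1)) \<in> borel_measurable borel"
    by (intro borel_measurable_times borel_measurable_indicator) auto
  have "((\<lambda>x::real^'n. indicator (ball 0 R) x * (R\<^sup>2 - (norm x)\<^sup>2) powr (\<gamma>-1)) has_integral V) UNIV"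
    using V I meas by (intro nn_integral_has_integral) auto
  hence "((\<lambda>x::real^'n. (R\<^sup>2 - (norm x)\<^sup>2) powr (\<gamma>-1)) has_integral V) (ball 0 R)"
  proof -
    have "(\<lambda>x::real^'n. indicator (ball 0 R) x * (R\<^sup>2 - (norm x)\<^sup>2) powr (\<gamma>-1))
        = (\<lambda>x. if x \<in> ball 0 R then (R\<^sup>2 - (norm x)\<^sup>2) powr (\<gamma>-1) else 0)"
      by (auto simp: indicator_def fun_eq_iff)
    with \<open>((\<lambda>x::real^'n. indicator (ball 0 R) x * (R\<^sup>2 - (norm x)\<^sup>2) powr (\<gamma>-1)) has_integral V) UNIV\<close>
    show ?thesis by (subst has_integral_restrict_UNIV[symmetric]) simp
  qed
  thus ?thesis by (simp add: V_def K0_def)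
qed


lemma const_one:
  fixes R \<gamma> d :: real assumes "R > 0" "\<gamma> > 0" "d = real n" "n > 0"
  shows "Gamma (\<gamma> + d/2) / (pi powr (d/2) * Gamma \<gamma>) * (1 / R powr (d - 2 + 2*\<gamma>))
         * (unit_ball_vol d * R ^ n * (d/2) * R powr (2*\<gamma>-2) * Beta (d/2) \<gamma>) = 1"
proof -
  have d: "d/2 > 0" using assms by simp
  have "d/2 \<notin> \<int>\<^sub>\<le>\<^sub>0" using d nonpos_Ints_nonpos by fastforce
  hence G1: "Gamma (d/2 + 1) = (d/2) * Gamma (d/2)" using Gamma_plus1[of "d/2"] by simp
  have Gp: "Gamma (d/2) > 0" "Gamma \<gamma> > 0" "Gamma (d/2 + \<gamma>) > 0" using d assms by (auto intro!: Gamma_real_pos)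
  have Rp: "R ^ n * R powr (2*\<gamma>-2) = R powr (d - 2 + 2*\<gamma>)"
    using assms by (simp add: powr_realpow[symmetric] powr_add[symmetric] algebra_simps)
  have X: "R powr (d - 2 + 2*\<gamma>) > 0" using assms by simp
  have e: "unit_ball_vol d * R ^ n * (d/2) * R powr (2*\<gamma>-2) * Beta (d/2) \<gamma>
        = (unit_ball_vol d * (d/2) * Beta (d/2) \<gamma>) * R powr (d - 2 + 2*\<gamma>)"
  proof -
    have "unit_ball_vol d * R ^ n * (d/2) * R powr (2*\<gamma>-2) * Beta (d/2) \<gamma>
        = (unit_ball_vol d * (d/2) * Beta (d/2) \<gamma>) * (R ^ n * R powr (2*\<gamma>-2))"
      by (simp only: ac_simps)
    thus ?thesis by (simp only: Rp)
  qed
  have f: "unit_ball_vol d * (d/2) * Beta (d/2) \<gamma> = pi powr (d/2) * Gamma \<gamma> / Gamma (\<gamma> + d/2)"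
    using Gp d unfolding unit_ball_vol_def Beta_def G1 by (simp add: field_simps add.commute \<open>Gamma (d/2) > 0\<close>[THEN less_imp_neq, symmetric])
  show ?thesis unfolding e f using X Gp by (simp add: field_simps add.commute)
qed

lemma second_deriv_lemma:
  fixes f f1 :: "real \<Rightarrow> real"
  assumes S: "open S" "t \<in> S" and D1': "\<forall>s\<in>S. (f has_real_derivative f1 s) (at s)"
    and D2: "(f1 has_real_derivative f2) (at t)"
  shows "f differentiable (at t)" "deriv f t = f1 t" "deriv f differentiable (at t)" "deriv (deriv f) t = f2"
proof -
  have D1: "(f has_real_derivative f1 s) (at s)" if "s \<in> S" for s using D1' that by blast
  show "f differentiable (at t)" using D1[OF S(2)] real_differentiable_def by blast
  show "deriv f t = f1 t" using D1[OF S(2)] by (rule DERIV_imp_deriv)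
  have "(deriv f has_real_derivative f2) (at t)"
    using D2 S by (rule has_field_derivative_transform_within_open) (use D1 DERIV_imp_deriv in metis)
  thus "deriv f differentiable (at t)" "deriv (deriv f) t = f2"
    using real_differentiable_def DERIV_imp_deriv by blast+
qed


lemma time_deriv1:
  fixes Kc a b c \<rho> s :: real
  assumes "s > 0" "c\<^sup>2 * s\<^sup>2 - \<rho> > 0"
  shows "((\<lambda>s. Kc * s powr (-a) * (c\<^sup>2 * s\<^sup>2 - \<rho>) powr b) has_real_derivative
     Kc * ((-a) * s powr (-a-1) * (c\<^sup>2 * s\<^sup>2 - \<rho>) powr b + s powr (-a) * (b * (c\<^sup>2 * s\<^sup>2 - \<rho>) powr (b-1) * (2 * c\<^sup>2 * s)))) (at s)"
  using assms by (auto intro!: derivative_eq_intros simp: algebra_simps power2_eq_square)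

lemma time_deriv2:
  fixes Kc a b c \<rho> s :: real
  assumes "s > 0" "c\<^sup>2 * s\<^sup>2 - \<rho> > 0"
  shows "((\<lambda>s. Kc * ((-a) * s powr (-a-1) * (c\<^sup>2 * s\<^sup>2 - \<rho>) powr b + s powr (-a) * (b * (c\<^sup>2 * s\<^sup>2 - \<rho>) powr (b-1) * (2 * c\<^sup>2 * s)))) has_real_derivative
     Kc * ((-a) * ((-a-1) * s powr (-a-1-1)) * (c\<^sup>2 * s\<^sup>2 - \<rho>) powr b
           + (-a) * s powr (-a-1) * (b * (c\<^sup>2 * s\<^sup>2 - \<rho>) powr (b-1) * (2 * c\<^sup>2 * s))
           + (-a) * s powr (-a-1) * (b * (c\<^sup>2 * s\<^sup>2 - \<rho>) powr (b-1) * (2 * c\<^sup>2 * s))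
           + s powr (-a) * (b * ((b-1) * (c\<^sup>2 * s\<^sup>2 - \<rho>) powr (b-1-1) * (2 * c\<^sup>2 * s)) * (2 * c\<^sup>2 * s)
                            + b * (c\<^sup>2 * s\<^sup>2 - \<rho>) powr (b-1) * (2 * c\<^sup>2)))) (at s)"
  using assms by (auto intro!: derivative_eq_intros simp: algebra_simps power2_eq_square)

lemma space_deriv1:
  fixes K b w \<xi> v :: real
  assumes "w - (2 * v * \<xi> + v\<^sup>2) > 0"
  shows "((\<lambda>v. K * (w - (2 * v * \<xi> + v\<^sup>2)) powr b) has_real_derivative
     K * (b * (w - (2 * v * \<xi> + v\<^sup>2)) powr (b-1) * (-(2 * \<xi> + 2 * v)))) (at v)"
  using assms by (auto intro!: derivative_eq_intros simp: algebra_simps power2_eq_square)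

lemma space_deriv2:
  fixes K b w \<xi> :: real
  assumes "w > 0"
  shows "((\<lambda>v. K * (b * (w - (2 * v * \<xi> + v\<^sup>2)) powr (b-1) * (-(2 * \<xi> + 2 * v)))) has_real_derivative
     K * (b * ((b-1) * w powr (b-1-1) * (-(2 * \<xi>))) * (-(2 * \<xi>)) + b * w powr (b-1) * (-2))) (at 0)"
  using assms by (auto intro!: derivative_eq_intros simp: algebra_simps power2_eq_square)


lemma norm_axis_sq: "(norm (x + v *\<^sub>R axis j (1::real)))\<^sup>2 = (norm x)\<^sup>2 + (2 * v * vec_nth x j + v\<^sup>2)"
  for x :: "real^'n"
  by (simp only: power2_norm_eq_inner) (simp add: inner_add_left inner_add_right inner_axis inner_axis' inner_axis_axis
      inner_commute algebra_simps power2_eq_square)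

lemma sum_sq_norm: "(\<Sum>j\<in>UNIV. (vec_nth x j)\<^sup>2) = (norm x)\<^sup>2"
  for x :: "real^'n"
  by (simp only: power2_norm_eq_inner) (simp add: inner_vec_def power2_eq_square)

lemma pde_identity:
  fixes Kc a b c \<rho> t d A B W :: real
  assumes t: "t > 0" and W: "W > 0" "W = c\<^sup>2 * t\<^sup>2 - \<rho>" and a: "a = d + 2*b"
  shows "Kc * ((-a) * ((-a-1) * (A/t/t)) * B + (-a)*(A/t)*(b*(B/W)*(2*c\<^sup>2*t)) + (-a)*(A/t)*(b*(B/W)*(2*c\<^sup>2*t))
            + A*(b*((b-1)*(B/W/W)*(2*c\<^sup>2*t))*(2*c\<^sup>2*t) + b*(B/W)*(2*c\<^sup>2)))
   + (a+1)/t * (Kc * ((-a)*(A/t)*B + A*(b*(B/W)*(2*c\<^sup>2*t))))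
   = c\<^sup>2 * ((Kc*A) * (b*(b-1)*(B/W/W)*(4*\<rho>) - 2*d*b*(B/W)))"
proof -
  have r: "\<rho> = c\<^sup>2 * t\<^sup>2 - W" using W by simp
  show ?thesis unfolding r a using t W(1)
    by (simp add: field_simps) (simp add: algebra_simps power2_eq_square)
qed


theorem theorem4p1:
  fixes c \<gamma> :: real
  assumes "c > 0" and "\<gamma> > 0"
  defines "p \<equiv> epd_density c \<gamma> :: real ^ 'n \<Rightarrow> real \<Rightarrow> real"
  shows "(\<forall>t>0. (\<forall>x\<in>ball 0 (c * t). p x t \<ge> 0)
                 \<and> ((\<lambda>x. p x t) has_integral 1) (ball 0 (c * t)))
       \<and> (\<forall>x t. t > 0 \<and> norm x < c * t \<longrightarrow>
            (\<lambda>s. p x s) differentiable (at t)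
          \<and> (\<lambda>s. deriv (\<lambda>r. p x r) s) differentiable (at t)
          \<and> (\<forall>j. (\<lambda>v. p (x + v *\<^sub>R axis j 1) t) differentiable (at 0)
                \<and> (\<lambda>u. deriv (\<lambda>v. p (x + v *\<^sub>R axis j 1) t) u) differentiable (at 0))
          \<and> deriv (\<lambda>s. deriv (\<lambda>r. p x r) s) t
              + (real CARD('n) + 2 * \<gamma> - 1) / t * deriv (\<lambda>s. p x s) t
            = c\<^sup>2 * (\<Sum>j\<in>UNIV. deriv (\<lambda>u. deriv (\<lambda>v. p (x + v *\<^sub>R axis j 1) t) u) 0))"
proof -
  note c = \<open>c > 0\<close> and g = \<open>\<gamma> > 0\<close>
  define d where "d = real CARD('n)"
  define K where "K = Gamma (\<gamma> + d/2) / (pi powr (d/2) * Gamma \<gamma>)"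
  define a where "a = d - 2 + 2 * \<gamma>"
  define b where "b = \<gamma> - 1"
  have pform: "p x s = K * (1/(c * s) powr a) * (c\<^sup>2 * s\<^sup>2 - (norm x)\<^sup>2) powr b"
    if "s > 0" "norm x < c * s" for x s
    using that by (simp add: p_def epd_density_def K_def a_def b_def d_def)
  have d0: "d > 0" by (simp add: d_def)
  have K: "K > 0" unfolding K_def using g d0 by (intro divide_pos_pos mult_pos_pos Gamma_real_pos) auto
  have part1: "\<forall>t>0. (\<forall>x\<in>ball 0 (c * t). p x t \<ge> 0) \<and> ((\<lambda>x. p x t) has_integral 1) (ball 0 (c * t))"
  proof (intro allI impI conjI ballI)
    fix t :: real assume t: "t > 0"
    fix x :: "real^'n" assume "x \<in> ball 0 (c * t)"
    hence "norm x < c * t" by simp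
    thus "p x t \<ge> 0" using pform[OF t] K by simp
  next
    fix t :: real assume t: "t > 0"
    define R where "R = c * t"
    have R: "R > 0" using c t by (simp add: R_def)
    have "((\<lambda>x::real^'n. K * (1 / R powr a) * (R\<^sup>2 - (norm x)\<^sup>2) powr (\<gamma>-1)) has_integral
           K * (1 / R powr a) * (unit_ball_vol d * R ^ CARD('n) * (d/2) * R powr (2 * \<gamma>-2) * Beta (d/2) \<gamma>)) (ball 0 R)"
      unfolding d_def by (intro has_integral_mult_right ball_integral R g)
    also have "K * (1 / R powr a) * (unit_ball_vol d * R ^ CARD('n) * (d/2) * R powr (2 * \<gamma>-2) * Beta (d/2) \<gamma>) = 1"
      unfolding K_def a_def by (rule const_one[OF R g d_def]) simp
    finally have I: "((\<lambda>x::real^'n. K * (1 / R powr a) * (R\<^sup>2 - (norm x)\<^sup>2) powr (\<gamma>-1)) has_integral 1) (ball 0 R)" .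
    show "((\<lambda>x. p x t) has_integral 1) (ball 0 (c * t))"
      unfolding R_def[symmetric]
    proof (rule has_integral_eq[OF _ I])
      fix x :: "real^'n" assume "x \<in> ball 0 R"
      hence "norm x < c * t" by (simp add: R_def)
      thus "K * (1 / R powr a) * (R\<^sup>2 - (norm x)\<^sup>2) powr (\<gamma>-1) = p x t"
        using pform[OF t] by (simp add: R_def b_def power_mult_distrib)
    qed
  qed
  have part2: "(\<lambda>s. p x s) differentiable (at t)
          \<and> (\<lambda>s. deriv (\<lambda>r. p x r) s) differentiable (at t)
          \<and> (\<forall>j. (\<lambda>v. p (x + v *\<^sub>R axis j 1) t) differentiable (at 0)
                \<and> (\<lambda>u. deriv (\<lambda>v. p (x + v *\<^sub>R axis j 1) t) u) differentiable (at 0))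
          \<and> deriv (\<lambda>s. deriv (\<lambda>r. p x r) s) t
              + (real CARD('n) + 2 * \<gamma> - 1) / t * deriv (\<lambda>s. p x s) t
            = c\<^sup>2 * (\<Sum>j\<in>UNIV. deriv (\<lambda>u. deriv (\<lambda>v. p (x + v *\<^sub>R axis j 1) t) u) 0)"
    if t: "t > 0" and xt: "norm x < c * t" for x t
  proof -
    define \<rho> where "\<rho> = (norm x)\<^sup>2"
    define W where "W = c\<^sup>2 * t\<^sup>2 - \<rho>"
    have W: "W > 0"
    proof -
      have "(norm x)\<^sup>2 < (c * t)\<^sup>2" using xt by (intro power_strict_mono) auto
      thus ?thesis by (simp add: W_def \<rho>_def power_mult_distrib)
    qed
    define Kc where "Kc = K * c powr (-a)"
    define S where "S = {norm x / c <..}"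
    have S: "open S" "t \<in> S" using xt c by (auto simp: S_def field_simps)
    have Spos: "s > 0" "norm x < c * s" "c\<^sup>2 * s\<^sup>2 - \<rho> > 0" if "s \<in> S" for s
    proof -
      have "norm x / c < s" using that by (simp add: S_def)
      thus s: "norm x < c * s" using c by (simp add: field_simps)
      thus "s > 0" using c by (smt (verit) norm_ge_zero zero_less_mult_pos)
      have "(norm x)\<^sup>2 < (c * s)\<^sup>2" using s by (intro power_strict_mono) auto
      thus "c\<^sup>2 * s\<^sup>2 - \<rho> > 0" by (simp add: \<rho>_def power_mult_distrib)
    qed
    have eqS: "Kc * s powr (-a) * (c\<^sup>2 * s\<^sup>2 - \<rho>) powr b = p x s" if "s \<in> S" for s
    proof -
      have "1 / (c * s) powr a = c powr (-a) * s powr (-a)"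
        by (simp add: powr_mult powr_minus_divide)
      thus ?thesis using pform[OF Spos(1,2)[OF that]] by (simp add: Kc_def \<rho>_def)
    qed
    define G1 where "G1 = (\<lambda>s. Kc * ((-a) * s powr (-a-1) * (c\<^sup>2 * s\<^sup>2 - \<rho>) powr b + s powr (-a) * (b * (c\<^sup>2 * s\<^sup>2 - \<rho>) powr (b-1) * (2 * c\<^sup>2 * s))))"
    have TD1: "(p x has_real_derivative G1 s) (at s)" if "s \<in> S" for s
      unfolding G1_def
      by (rule has_field_derivative_transform_within_open[OF time_deriv1 S(1) that])
         (use Spos[OF that] eqS in auto)
    have TD2: "(G1 has_real_derivative
         Kc * ((-a) * ((-a-1) * t powr (-a-1-1)) * (c\<^sup>2 * t\<^sup>2 - \<rho>) powr b
           + (-a) * t powr (-a-1) * (b * (c\<^sup>2 * t\<^sup>2 - \<rho>) powr (b-1) * (2 * c\<^sup>2 * t))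
           + (-a) * t powr (-a-1) * (b * (c\<^sup>2 * t\<^sup>2 - \<rho>) powr (b-1) * (2 * c\<^sup>2 * t))
           + t powr (-a) * (b * ((b-1) * (c\<^sup>2 * t\<^sup>2 - \<rho>) powr (b-1-1) * (2 * c\<^sup>2 * t)) * (2 * c\<^sup>2 * t)
                            + b * (c\<^sup>2 * t\<^sup>2 - \<rho>) powr (b-1) * (2 * c\<^sup>2)))) (at t)"
      unfolding G1_def by (rule time_deriv2) (use Spos[OF S(2)] in auto)
    have TD1': "\<forall>s\<in>S. (p x has_real_derivative G1 s) (at s)" using TD1 by blast
    note T = second_deriv_lemma[OF S TD1' TD2]
    define Kt where "Kt = K * (1/(c * t) powr a)"
    have SP: "\<And>j. (\<lambda>v. p (x + v *\<^sub>R axis j 1) t) differentiable (at 0)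
           \<and> (\<lambda>u. deriv (\<lambda>v. p (x + v *\<^sub>R axis j 1) t) u) differentiable (at 0)
           \<and> deriv (\<lambda>u. deriv (\<lambda>v. p (x + v *\<^sub>R axis j 1) t) u) 0
             = Kt * (b * ((b-1) * W powr (b-1-1) * (-(2 * vec_nth x j))) * (-(2 * vec_nth x j)) + b * W powr (b-1) * (-2))"
    proof -
      fix j
      define Sv where "Sv = {v. norm (x + v *\<^sub>R axis j (1::real)) < c * t}"
      have Sv: "open Sv" "0 \<in> Sv" unfolding Sv_def using xt
        by (auto intro!: open_Collect_less continuous_intros)
      have Wv: "W - (2 * v * vec_nth x j + v\<^sup>2) > 0" if "v \<in> Sv" for v
      proof -
        have "(norm (x + v *\<^sub>R axis j (1::real)))\<^sup>2 < (c * t)\<^sup>2" using that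
          by (intro power_strict_mono) (auto simp: Sv_def)
        thus ?thesis unfolding norm_axis_sq by (simp add: W_def \<rho>_def power_mult_distrib)
      qed
      have eqSv: "Kt * (W - (2 * v * vec_nth x j + v\<^sup>2)) powr b = p (x + v *\<^sub>R axis j 1) t" if "v \<in> Sv" for v
      proof -
        have "norm (x + v *\<^sub>R axis j (1::real)) < c * t" using that by (simp add: Sv_def)
        from pform[OF t this] show ?thesis
          by (simp add: Kt_def norm_axis_sq W_def \<rho>_def algebra_simps)
      qed
      have D1: "((\<lambda>v. p (x + v *\<^sub>R axis j 1) t) has_real_derivative
           Kt * (b * (W - (2 * v * vec_nth x j + v\<^sup>2)) powr (b-1) * (-(2 * vec_nth x j + 2 * v)))) (at v)"
        if "v \<in> Sv" for v
        by (rule has_field_derivative_transform_within_open[OF space_deriv1[OF Wv[OF that]] Sv(1) that])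
           (use eqSv in auto)
      have D2: "((\<lambda>v. Kt * (b * (W - (2 * v * vec_nth x j + v\<^sup>2)) powr (b-1) * (-(2 * vec_nth x j + 2 * v)))) has_real_derivative
          Kt * (b * ((b-1) * W powr (b-1-1) * (-(2 * vec_nth x j))) * (-(2 * vec_nth x j)) + b * W powr (b-1) * (-2))) (at 0)"
        by (rule space_deriv2[OF W])
      have D1': "\<forall>v\<in>Sv. ((\<lambda>v. p (x + v *\<^sub>R axis j 1) t) has_real_derivative Kt * (b * (W - (2 * v * vec_nth x j + v\<^sup>2)) powr (b-1) * (-(2 * vec_nth x j + 2 * v)))) (at v)" using D1 by blast
      note L = second_deriv_lemma[OF Sv D1' D2]
      show "?thesis j" using L by simp
    qed
    have sumeq: "(\<Sum>j\<in>UNIV. Kt * (b * ((b-1) * W powr (b-1-1) * (-(2 * vec_nth x j))) * (-(2 * vec_nth x j)) + b * W powr (b-1) * (-2)))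
        = Kt * (b * (b-1) * W powr (b-1-1) * (4 * \<rho>) - 2 * d * b * W powr (b-1))"
    proof -
      have "(\<Sum>j\<in>UNIV. Kt * (b * ((b-1) * W powr (b-1-1) * (-(2 * vec_nth x j))) * (-(2 * vec_nth x j)) + b * W powr (b-1) * (-2)))
          = (\<Sum>j\<in>UNIV. (4 * Kt * b * (b-1) * W powr (b-1-1)) * (vec_nth x j)\<^sup>2 + (- 2 * Kt * b * W powr (b-1)))"
        by (intro sum.cong refl) (simp add: algebra_simps power2_eq_square)
      also have "\<dots> = (4 * Kt * b * (b-1) * W powr (b-1-1)) * \<rho> + d * (- 2 * Kt * b * W powr (b-1))"
        by (simp add: sum.distrib sum_subtractf sum_distrib_left[symmetric] sum_sq_norm \<rho>_def d_def)
      finally show ?thesis by (simp add: algebra_simps)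
    qed
    define A where "A = t powr (-a)"
    define B where "B = W powr b"
    have pw: "t powr (-a-1) = A/t" "t powr (-a-1-1) = A/t/t" "W powr (b-1) = B/W" "W powr (b-1-1) = B/W/W"
      using t W by (simp only: powr_diff A_def B_def; simp)+
    have Kt: "Kt = Kc * A"
      by (simp add: Kt_def Kc_def A_def powr_mult powr_minus_divide)
    have Wt: "c\<^sup>2 * t\<^sup>2 - \<rho> = W" by (simp add: W_def)
    have coef: "real CARD('n) + 2 * \<gamma> - 1 = a + 1" by (simp add: a_def d_def)
    have "deriv (\<lambda>s. deriv (\<lambda>r. p x r) s) t + (real CARD('n) + 2 * \<gamma> - 1) / t * deriv (\<lambda>s. p x s) t
        = c\<^sup>2 * (\<Sum>j\<in>UNIV. deriv (\<lambda>u. deriv (\<lambda>v. p (x + v *\<^sub>R axis j 1) t) u) 0)"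
    proof -
      have WB: "W powr b = B" by (simp add: B_def)
      have TA: "t powr (-a) = A" by (simp add: A_def)
      show ?thesis
        unfolding SP[THEN conjunct2, THEN conjunct2] sumeq
        unfolding coef T(2) T(4) G1_def Wt pw Kt WB TA
        by (rule pde_identity[OF t W W_def]) (simp add: a_def b_def)
    qed
    thus ?thesis using T(1,3) SP by simp
  qed
  show ?thesis using part1 part2 by blast
qed

end
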